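(* Let $X$ be a finite simple graph and let $k=\alpha_q(X)$. Then $\alpha_q(X)>\alpha(X)$ if and only if every quantum $k$-coclique matrix $P=(P_{vi})$ for $X$ (in any dimension $d$) is Kochen–Specker, i.e. there is no choice of vertices $v_1,\dots,v_k\in V(X)$ such that $P_{v_i i}P_{v_j j}\neq 0$ for all $i\neq j$ in $[k]$.
   Context: All graphs are finite and simple; $\alpha(X)$ is the independence number of $X$. For a finite simple graph $X$ and positive integers $s,d$, a quantum $s$-coclique matrix (in dimension $d$) is a $|V(X)|\times s$ array $P=(P_{vi})_{v\in V(X),\, i\in[s]}$ of orthogonal projections $P_{vi}\in\mathbb{C}^{d\times d}$ such that (a) $\sum_{v\in V(X)}P_{vi}=I_d$ for every $i\in[s]$; (b) $P_{vi}P_{uj}=0$ for all $i\neq j$ in $[s]$ and all adjacent vertices $u\sim v$; (c) $P_{vi}P_{vj}=0$ for all $v\in V(X)$ and all $i\neq j$ in $[s]$. The quantum independence number $\alpha_q(X)$ is the largest $s$ such that a quantum $s$-coclique matrix for $X$ exists for some $d\ge 1$. (In the paper's terminology, the condition on $P$ says that the orthogonality graph of the entries of $P$, with the columns $\{P_{vi}:v\in V(X)\}$ as the cliques, is a projective Kochen–Specker graph: every transversal choosing one entry from each column contains two orthogonal entries, where projections $A,B$ are orthogonal iff $\operatorname{tr}(AB)=0$, equivalently $AB=0$.) *)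

theory Defs
  imports "Jordan_Normal_Form.Matrix" "HOL.Complex"
begin

definition simple_graph :: "'a set \<Rightarrow> ('a \<Rightarrow> 'a \<Rightarrow> bool) \<Rightarrow> bool" where
  "simple_graph V E \<longleftrightarrow> finite V \<and> (\<forall>u v. E u v \<longrightarrow> u \<in> V \<and> v \<in> V)
     \<and> (\<forall>u v. E u v \<longrightarrow> E v u) \<and> (\<forall>v. \<not> E v v)"

definition independent_set :: "'a set \<Rightarrow> ('a \<Rightarrow> 'a \<Rightarrow> bool) \<Rightarrow> 'a set \<Rightarrow> bool" where
  "independent_set V E S \<longleftrightarrow> S \<subseteq> V \<and> (\<forall>u\<in>S. \<forall>v\<in>S. \<not> E u v)"

definition indep_num :: "'a set \<Rightarrow> ('a \<Rightarrow> 'a \<Rightarrow> bool) \<Rightarrow> nat" where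
  "indep_num V E = Sup (card ` {S. independent_set V E S})"

definition orth_proj :: "nat \<Rightarrow> complex mat \<Rightarrow> bool" where
  "orth_proj d A \<longleftrightarrow> A \<in> carrier_mat d d \<and> A * A = A
     \<and> (\<forall>a<d. \<forall>b<d. A $$ (b, a) = cnj (A $$ (a, b)))"

definition quantum_coclique :: "'a set \<Rightarrow> ('a \<Rightarrow> 'a \<Rightarrow> bool) \<Rightarrow> nat \<Rightarrow> nat
     \<Rightarrow> ('a \<Rightarrow> nat \<Rightarrow> complex mat) \<Rightarrow> bool" where
  "quantum_coclique V E s d P \<longleftrightarrow>
     (\<forall>v\<in>V. \<forall>i<s. orth_proj d (P v i))
   \<and> (\<forall>i<s. \<forall>a<d. \<forall>b<d. (\<Sum>v\<in>V. P v i $$ (a, b)) = (1\<^sub>m d) $$ (a, b))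
   \<and> (\<forall>i<s. \<forall>j<s. i \<noteq> j \<longrightarrow> (\<forall>u\<in>V. \<forall>v\<in>V. E u v \<longrightarrow> P v i * P u j = 0\<^sub>m d d))
   \<and> (\<forall>v\<in>V. \<forall>i<s. \<forall>j<s. i \<noteq> j \<longrightarrow> P v i * P v j = 0\<^sub>m d d)"

(* quantum independence number: largest positive s admitting a quantum s-coclique matrix
   in some dimension d \<ge> 1 (Sup of a finite set of naturals = its maximum) *)
definition quantum_indep_num :: "'a set \<Rightarrow> ('a \<Rightarrow> 'a \<Rightarrow> bool) \<Rightarrow> nat" where
  "quantum_indep_num V E =
     Sup {s. s \<ge> 1 \<and> (\<exists>d\<ge>1. \<exists>P. quantum_coclique V E s d P)}"

definition kochen_specker :: "'a set \<Rightarrow> nat \<Rightarrow> nat \<Rightarrow> ('a \<Rightarrow> nat \<Rightarrow> complex mat) \<Rightarrow> bool" where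
  "kochen_specker V k d P \<longleftrightarrow>
     \<not> (\<exists>f. (\<forall>i<k. f i \<in> V) \<and>
            (\<forall>i<k. \<forall>j<k. i \<noteq> j \<longrightarrow> P (f i) i * P (f j) j \<noteq> 0\<^sub>m d d))"

end

theory Submission
  imports Defs
begin

lemma indep_fin:
  assumes "simple_graph V E"
  shows "finite (card ` {S. independent_set V E S})"
proof -
  have "{S. independent_set V E S} \<subseteq> Pow V" by (auto simp: independent_set_def)
  moreover have "finite V" using assms by (simp add: simple_graph_def)
  ultimately show ?thesis by (meson finite_Pow_iff finite_imageI finite_subset)
qed

lemma indep_ne: "card ` {S. independent_set V E S} \<noteq> {}"
proof -
  have "independent_set V E {}" by (simp add: independent_set_def)
  thus ?thesis by blast
qed

lemma indep_upper:
  assumes "simple_graph V E" "independent_set V E S"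
  shows "card S \<le> indep_num V E"
  unfolding indep_num_def
  using assms indep_fin[OF assms(1)] by (intro cSup_upper) (auto intro: bdd_above_finite)

lemma indep_attained:
  assumes "simple_graph V E"
  shows "\<exists>S. independent_set V E S \<and> card S = indep_num V E"
proof -
  have "indep_num V E \<in> card ` {S. independent_set V E S}"
    unfolding indep_num_def Sup_nat_def using indep_fin[OF assms] indep_ne
    by (simp add: Max_in indep_ne)
  thus ?thesis by auto
qed

theorem mainTheorem4:
  fixes V :: "'a set" and E :: "'a \<Rightarrow> 'a \<Rightarrow> bool"
  assumes "simple_graph V E" and "V \<noteq> {}"
  shows "quantum_indep_num V E > indep_num V E \<longleftrightarrow>
    (\<forall>d\<ge>1. \<forall>P. quantum_coclique V E (quantum_indep_num V E) d P
        \<longrightarrow> kochen_specker V (quantum_indep_num V E) d P)"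
proof
  let ?k = "quantum_indep_num V E"
  assume gt: "?k > indep_num V E"
  show "\<forall>d\<ge>1. \<forall>P. quantum_coclique V E ?k d P \<longrightarrow> kochen_specker V ?k d P"
  proof (intro allI impI)
    fix d P assume "d \<ge> 1" and q: "quantum_coclique V E ?k d P"
    show "kochen_specker V ?k d P"
    proof (rule ccontr)
      assume "\<not> kochen_specker V ?k d P"
      then obtain f where fV: "\<forall>i<?k. f i \<in> V"
        and nz: "\<forall>i<?k. \<forall>j<?k. i \<noteq> j \<longrightarrow> P (f i) i * P (f j) j \<noteq> 0\<^sub>m d d"
        unfolding kochen_specker_def by blast
      have inj: "inj_on f {..<?k}"
      proof (rule inj_onI)
        fix i j assume "i \<in> {..<?k}" "j \<in> {..<?k}" "f i = f j"
        then show "i = j" using q fV nz unfolding quantum_coclique_def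
          by (metis lessThan_iff)
      qed
      have ind: "independent_set V E (f ` {..<?k})"
        unfolding independent_set_def
      proof (intro conjI ballI)
        show "f ` {..<?k} \<subseteq> V" using fV by auto
      next
        fix u v assume "u \<in> f ` {..<?k}" "v \<in> f ` {..<?k}"
        then obtain i j where ij: "i < ?k" "j < ?k" "u = f i" "v = f j" by auto
        show "\<not> E u v"
        proof
          assume e: "E u v"
          have sym: "E v u" using e assms(1) by (simp add: simple_graph_def)
          have "i \<noteq> j" using e ij assms(1) by (auto simp: simple_graph_def)
          then have "P (f i) i * P (f j) j = 0\<^sub>m d d"
            using q ij sym fV unfolding quantum_coclique_def by blast
          thus False using nz ij \<open>i \<noteq> j\<close> by blast
        qed
      qed
      have "card (f ` {..<?k}) = ?k" using inj by (simp add: card_image)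
      hence "?k \<le> indep_num V E" using indep_upper[OF assms(1) ind] by simp
      thus False using gt by simp
    qed
  qed
next
  let ?k = "quantum_indep_num V E"
  assume ks: "\<forall>d\<ge>1. \<forall>P. quantum_coclique V E ?k d P \<longrightarrow> kochen_specker V ?k d P"
  show "?k > indep_num V E"
  proof (rule ccontr)
    assume "\<not> ?k > indep_num V E"
    hence le: "?k \<le> indep_num V E" by simp
    obtain S where S: "independent_set V E S" "card S = indep_num V E"
      using indep_attained[OF assms(1)] by blast
    have finS: "finite S" using S(1) assms(1)
      by (auto simp: independent_set_def simple_graph_def intro: finite_subset)
    obtain T where T: "T \<subseteq> S" "card T = ?k"
      using obtain_subset_with_card_n[of ?k S] le S(2) by metis
    have finT: "finite T" using T(1) finS finite_subset by blast
    obtain s where s: "bij_betw s {0..<?k} T"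
      using ex_bij_betw_nat_finite[OF finT] T(2) by metis
    have sT: "\<And>i. i < ?k \<Longrightarrow> s i \<in> T" using s by (auto simp: bij_betw_def)
    have sV: "\<And>i. i < ?k \<Longrightarrow> s i \<in> V" using sT T(1) S(1)
      by (auto simp: independent_set_def)
    have sinj: "\<And>i j. i < ?k \<Longrightarrow> j < ?k \<Longrightarrow> s i = s j \<Longrightarrow> i = j"
      using s by (auto simp: bij_betw_def inj_on_def)
    have sind: "\<And>i j. i < ?k \<Longrightarrow> j < ?k \<Longrightarrow> \<not> E (s i) (s j)"
      using sT T(1) S(1) unfolding independent_set_def by (meson subsetD)
    define P where "P = (\<lambda>v i. if i < ?k \<and> v = s i then (1\<^sub>m 1 :: complex mat) else 0\<^sub>m 1 1)"
    have op1: "orth_proj 1 (1\<^sub>m 1)" by (auto simp: orth_proj_def)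
    have op0: "orth_proj 1 (0\<^sub>m 1 1)" by (auto simp: orth_proj_def)
    have q: "quantum_coclique V E ?k 1 P"
      unfolding quantum_coclique_def
    proof (intro conjI)
      show "\<forall>v\<in>V. \<forall>i<?k. orth_proj 1 (P v i)" using op0 op1 by (simp add: P_def)
    next
      show "\<forall>i<?k. \<forall>a<1. \<forall>b<1. (\<Sum>v\<in>V. P v i $$ (a, b)) = (1\<^sub>m 1) $$ (a, b)"
      proof (intro allI impI)
        fix i a b :: nat assume i: "i < ?k" and "a < 1" "b < 1"
        hence ab: "a = 0" "b = 0" by auto
        have "(\<Sum>v\<in>V. P v i $$ (a, b)) = (\<Sum>v\<in>V. if v = s i then 1 else 0)"
          using ab i by (intro sum.cong) (auto simp: P_def)
        also have "\<dots> = 1" using sV[OF i] assms(1) by (simp add: simple_graph_def)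
        finally show "(\<Sum>v\<in>V. P v i $$ (a, b)) = (1\<^sub>m 1) $$ (a, b)" using ab by simp
      qed
    next
      show "\<forall>i<?k. \<forall>j<?k. i \<noteq> j \<longrightarrow> (\<forall>u\<in>V. \<forall>v\<in>V. E u v \<longrightarrow> P v i * P u j = 0\<^sub>m 1 1)"
        using sind by (auto simp: P_def)
    next
      show "\<forall>v\<in>V. \<forall>i<?k. \<forall>j<?k. i \<noteq> j \<longrightarrow> P v i * P v j = 0\<^sub>m 1 1"
        using sinj by (auto simp: P_def)
    qed
    have "\<not> kochen_specker V ?k 1 P"
      unfolding kochen_specker_def
    proof (rule notI, erule notE, intro exI conjI)
      show "\<forall>i<?k. s i \<in> V" using sV by auto
      show "\<forall>i<?k. \<forall>j<?k. i \<noteq> j \<longrightarrow> P (s i) i * P (s j) j \<noteq> 0\<^sub>m 1 1"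
      proof (intro allI impI)
        fix i j assume "i < ?k" "j < ?k" "i \<noteq> j"
        hence "P (s i) i * P (s j) j = 1\<^sub>m 1" by (simp add: P_def)
        moreover have "(1\<^sub>m 1 :: complex mat) \<noteq> 0\<^sub>m 1 1"
        proof
          assume "(1\<^sub>m 1 :: complex mat) = 0\<^sub>m 1 1"
          hence "(1\<^sub>m 1 :: complex mat) $$ (0,0) = 0\<^sub>m 1 1 $$ (0,0)" by simp
          thus False by simp
        qed
        ultimately show "P (s i) i * P (s j) j \<noteq> 0\<^sub>m 1 1" by simp
      qed
    qed
    thus False using ks q by auto
  qed
qed

end
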